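(* Every finite graph is isomorphic to an induced subgraph of the dual enhanced power graph of some finite group, and this group can be taken to be cyclic.
   Context: The dual enhanced power graph $\mathrm{DEP}(G)$ of a group $G$ has vertex set $G\setminus\{1\}$, with distinct $x,y$ adjacent iff $\langle x\rangle\cap\langle y\rangle\ne\{1\}$. *)

theory Defs
  imports "HOL-Algebra.Elementary_Groups"
begin

definition finite_simple_graph :: "'a set \<Rightarrow> ('a \<Rightarrow> 'a \<Rightarrow> bool) \<Rightarrow> bool" where
  "finite_simple_graph V E \<longleftrightarrow> finite V \<and>
     (\<forall>u\<in>V. \<forall>v\<in>V. E u v \<longrightarrow> E v u) \<and> (\<forall>v\<in>V. \<not> E v v)"

definition dep_vertices :: "('g, 'b) monoid_scheme \<Rightarrow> 'g set" where
  "dep_vertices G = carrier G - {\<one>\<^bsub>G\<^esub>}"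

definition dep_adj :: "('g, 'b) monoid_scheme \<Rightarrow> 'g \<Rightarrow> 'g \<Rightarrow> bool" where
  "dep_adj G x y \<longleftrightarrow> x \<in> dep_vertices G \<and> y \<in> dep_vertices G \<and> x \<noteq> y \<and>
     generate G {x} \<inter> generate G {y} \<noteq> {\<one>\<^bsub>G\<^esub>}"

definition induced_embedding ::
  "'a set \<Rightarrow> ('a \<Rightarrow> 'a \<Rightarrow> bool) \<Rightarrow> 'c set \<Rightarrow> ('c \<Rightarrow> 'c \<Rightarrow> bool) \<Rightarrow> ('a \<Rightarrow> 'c) \<Rightarrow> bool" where
  "induced_embedding V E W F f \<longleftrightarrow> inj_on f V \<and> f ` V \<subseteq> W \<and>
     (\<forall>u\<in>V. \<forall>v\<in>V. E u v \<longleftrightarrow> F (f u) (f v))"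

end

theory Submission
  imports Defs "HOL-Algebra.Multiplicative_Group" "HOL-Computational_Algebra.Primes" "HOL-Library.Infinite_Set"
begin

definition zmod :: "nat \<Rightarrow> nat monoid" where
  "zmod N = \<lparr>carrier = {0..<N}, monoid.mult = (\<lambda>x y. (x+y) mod N), one = 0\<rparr>"

lemma zmod_group: assumes "0 < N" shows "group (zmod N)"
proof (rule groupI)
  fix x assume "x \<in> carrier (zmod N)"
  then show "\<exists>y\<in>carrier (zmod N). y \<otimes>\<^bsub>zmod N\<^esub> x = \<one>\<^bsub>zmod N\<^esub>"
    by (intro bexI[of _ "(N - x) mod N"]) (auto simp: zmod_def mod_add_left_eq assms)
qed (auto simp: zmod_def assms mod_add_left_eq mod_add_right_eq add.assoc)

lemma zmod_pow: assumes "x < N" shows "x [^]\<^bsub>zmod N\<^esub> (k::nat) = (k*x) mod N"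
  using assms by (induction k) (auto simp: zmod_def mod_add_right_eq add.commute)

lemma zmod_gen: assumes "0 < N" "x < N"
  shows "generate (zmod N) {x} = {(k*x) mod N | k. True}"
proof -
  interpret group "zmod N" using zmod_group[OF assms(1)] .
  have "generate (zmod N) {x} = {x [^]\<^bsub>zmod N\<^esub> k | k. k \<in> (UNIV :: nat set)}"
    by (rule generate_pow_on_finite_carrier) (auto simp: zmod_def assms)
  then show ?thesis using zmod_pow[OF assms(2)] by simp
qed

lemma zmod_gen_dvd: assumes "0 < N" "d dvd N" "d < N"
  shows "generate (zmod N) {d} = {y. y < N \<and> d dvd y}"
proof -
  have "{(k*d) mod N | k. True} = {y. y < N \<and> d dvd y}"
  proof (intro equalityI subsetI)
    fix y assume "y \<in> {(k*d) mod N | k. True}"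
    then obtain k where "y = k*d mod N" by auto
    then show "y \<in> {y. y < N \<and> d dvd y}" using assms by (simp add: dvd_mod)
  next
    fix y assume "y \<in> {y. y < N \<and> d dvd y}"
    then have "y < N" "d dvd y" by auto
    then obtain k where "y = k*d" by (metis dvd_def mult.commute)
    then have "y = k*d mod N" using \<open>y<N\<close> by simp
    then show "y \<in> {(k*d) mod N | k. True}" by blast
  qed
  then show ?thesis using zmod_gen assms by simp
qed

lemma zmod_cyclic: assumes "0 < N" shows "cyclic_group (zmod N)"
proof -
  interpret group "zmod N" using zmod_group[OF assms] .
  have "generate (zmod N) {1 mod N} = carrier (zmod N)"
  proof (cases "N = 1")
    case True then show ?thesis using zmod_gen[OF assms, of 0] by (auto simp: zmod_def)
  next
    case False
    then have "1 < N" using assms by simp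
    then show ?thesis using zmod_gen[OF assms, of 1] by (auto simp: zmod_def) (metis mod_less)
  qed
  then have "subgroup_generated (zmod N) {1 mod N} = zmod N"
    unfolding subgroup_generated_def using assms by (auto simp: zmod_def)
  then show ?thesis unfolding cyclic_group_def using assms by (auto simp: zmod_def)
qed

lemma prod_primes_dvd:
  fixes x :: nat
  assumes "finite A" "\<forall>p\<in>A. prime p" "\<forall>p\<in>A. p dvd x"
  shows "\<Prod>A dvd x"
  using assms
proof (induction A rule: finite_induct)
  case empty then show ?case by simp
next
  case (insert a A)
  have "coprime a (\<Prod>A)"
    using insert by (metis prime_imp_coprime prime_dvd_prod_iff primes_dvd_imp_eq id_apply insert_iff)
  then show ?case using insert by (simp add: divides_mult)
qed

lemma prime_dvd_prod_primes:
  fixes p :: nat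
  assumes "finite A" "\<forall>q\<in>A. prime q" "prime p"
  shows "p dvd \<Prod>A \<longleftrightarrow> p \<in> A"
  using assms by (metis prime_dvd_prod_iff primes_dvd_imp_eq id_apply dvd_prod_eqI dvd_refl)

lemma ne0_helper: "(0::nat) \<in> A \<Longrightarrow> A \<noteq> {0} \<Longrightarrow> \<exists>y\<in>A. y \<noteq> 0"
  by auto

theorem mainTheorem11:
  fixes V :: "'a set" and E :: "'a \<Rightarrow> 'a \<Rightarrow> bool"
  assumes "finite_simple_graph V E"
  shows "\<exists>G :: nat monoid. group G \<and> finite (carrier G) \<and> cyclic_group G \<and>
           (\<exists>f. induced_embedding V E (dep_vertices G) (dep_adj G) f)"
proof -
  from assms have finV: "finite V" and symE: "\<forall>u\<in>V. \<forall>v\<in>V. E u v \<longrightarrow> E v u"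
    and irr: "\<forall>v\<in>V. \<not> E v v" unfolding finite_simple_graph_def by auto
  define Idx where "Idx = (\<lambda>(u,v). {u,v}) ` (V \<times> V)"
  have finI: "finite Idx" using finV by (simp add: Idx_def)
  obtain h where h: "bij_betw h Idx {0..<card Idx}" using ex_bij_betw_finite_nat[OF finI] by blast
  define PR where "PR = {p::nat. prime p}"
  have infPR: "infinite PR" using primes_infinite PR_def by simp
  define pr where "pr = (\<lambda>s. enumerate PR (h s))"
  have pr_prime: "\<And>s. prime (pr s)" using enumerate_in_set[OF infPR] by (simp add: pr_def PR_def)
  have pr_inj: "inj_on pr Idx"
    using bij_betw_imp_inj_on[OF h] inj_enumerate[OF infPR]
    unfolding pr_def inj_on_def by blast
  have pr_eq: "\<And>a b u v. u \<in> V \<Longrightarrow> v \<in> V \<Longrightarrow> a \<in> V \<Longrightarrow> b \<in> V \<Longrightarrow> pr {a,u} = pr {b,v} \<Longrightarrow> {a,u} = {b,v}"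
  proof -
    fix a b u v assume "u \<in> V" "v \<in> V" "a \<in> V" "b \<in> V" "pr {a,u} = pr {b,v}"
    moreover have "{a,u} \<in> Idx" "{b,v} \<in> Idx" using \<open>u \<in> V\<close> \<open>v \<in> V\<close> \<open>a \<in> V\<close> \<open>b \<in> V\<close>
      unfolding Idx_def by force+
    ultimately show "{a,u} = {b,v}" using pr_inj unfolding inj_on_def by blast
  qed
  define nb where "nb v = {u\<in>V. u = v \<or> E u v}" for v
  define S where "S v = (\<lambda>u. pr {u,v}) ` nb v" for v
  define P where "P = pr ` Idx"
  define N where "N = \<Prod>P"
  define d where "d v = \<Prod>(P - S v)" for v
  have finP: "finite P" using finI P_def by simp
  have primeP: "\<forall>p\<in>P. prime p" using pr_prime P_def by auto
  have SP: "S v \<subseteq> P" if "v \<in> V" for v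
    using that unfolding S_def P_def nb_def Idx_def by force
  have finS: "finite (S v)" if "v \<in> V" for v using SP[OF that] finP finite_subset by blast
  have Nsplit: "N = d v * \<Prod>(S v)" if "v \<in> V" for v
    unfolding N_def d_def using prod.subset_diff[OF SP[OF that] finP] by simp
  have selfS: "pr {v} \<in> S v" if "v \<in> V" for v
    using that unfolding S_def nb_def by force
  have N0: "N > 0" unfolding N_def using primeP finP
    by (metis prime_gt_0_nat prod_pos)
  have dpos: "d v > 0" for v unfolding d_def using primeP finP
    by (metis DiffD1 prime_gt_0_nat prod_pos)
  have dlt: "d v < N" if "v \<in> V" for v
  proof -
    have "pr {v} dvd \<Prod>(S v)" using selfS[OF that] finS[OF that] by (simp add: dvd_prod_eqI)
    moreover have "\<Prod>(S v) > 0" using primeP SP[OF that] finS[OF that]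
      by (metis prime_gt_0_nat prod_pos subsetD)
    ultimately have "\<Prod>(S v) \<ge> pr {v}" by (simp add: dvd_imp_le)
    then have "\<Prod>(S v) > 1" using prime_gt_1_nat[OF pr_prime] by (meson less_le_trans)
    then show ?thesis using Nsplit[OF that] dpos[of v] by simp
  qed
  have ddvd: "d v dvd N" if "v \<in> V" for v using Nsplit[OF that] by simp
  have pdvd: "p dvd d v \<longleftrightarrow> p \<notin> S v" if "v \<in> V" "p \<in> P" for v p
    unfolding d_def using prime_dvd_prod_primes[of "P - S v" p] finP primeP that by auto
  have Sint: "S u \<inter> S v \<noteq> {} \<longleftrightarrow> E u v" if "u \<in> V" "v \<in> V" "u \<noteq> v" for u v
  proof
    assume "E u v"
    then have "E v u" using symE that by blast
    then have "pr {v,u} \<in> S u" "pr {u,v} \<in> S v" using \<open>E u v\<close> that unfolding S_def nb_def by force+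
    then show "S u \<inter> S v \<noteq> {}" by (metis disjoint_iff insert_commute)
  next
    assume "S u \<inter> S v \<noteq> {}"
    then obtain a b where ab: "a \<in> nb u" "b \<in> nb v" "pr {a,u} = pr {b,v}" unfolding S_def by blast
    then have "{a,u} = {b,v}" using pr_eq that unfolding nb_def by blast
    then have "a = v" using that by (metis doubleton_eq_iff)
    then have "E v u" using ab(1) that unfolding nb_def by auto
    then show "E u v" using symE that by blast
  qed
  have Sinj: "pr {u} \<notin> S v" if "u \<in> V" "v \<in> V" "u \<noteq> v" for u v
  proof
    assume "pr {u} \<in> S v"
    then obtain b where "b \<in> nb v" "pr {u,u} = pr {b,v}" unfolding S_def by auto
    then have "{u,u} = {b,v}" using pr_eq that unfolding nb_def by blast
    then show False using that by (metis doubleton_eq_iff)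
  qed
  have dinj: "inj_on d V"
  proof (rule inj_onI, rule ccontr)
    fix u v assume uv: "u \<in> V" "v \<in> V" "d u = d v" "u \<noteq> v"
    have "pr {u} \<in> P" using selfS[OF uv(1)] SP[OF uv(1)] by blast
    have "pr {u} dvd d v" using pdvd[OF uv(2) \<open>pr {u} \<in> P\<close>] Sinj[OF uv(1,2,4)] by simp
    moreover have "\<not> pr {u} dvd d u" using pdvd[OF uv(1) \<open>pr {u} \<in> P\<close>] selfS[OF uv(1)] by simp
    ultimately show False using uv by simp
  qed
  have gen: "generate (zmod N) {d v} = {y. y < N \<and> d v dvd y}" if "v \<in> V" for v
    using zmod_gen_dvd[OF N0 ddvd[OF that] dlt[OF that]] .
  have key: "(\<exists>y. y < N \<and> y \<noteq> 0 \<and> d u dvd y \<and> d v dvd y) \<longleftrightarrow> S u \<inter> S v \<noteq> {}"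
    if uvV: "u \<in> V" "v \<in> V" for u v
  proof
    assume "\<exists>y. y < N \<and> y \<noteq> 0 \<and> d u dvd y \<and> d v dvd y"
    then obtain y where y: "y < N" "y \<noteq> 0" "d u dvd y" "d v dvd y" by blast
    show "S u \<inter> S v \<noteq> {}"
    proof
      assume disj: "S u \<inter> S v = {}"
      have "\<forall>p\<in>P. p dvd y"
      proof
        fix p assume "p \<in> P"
        then have "p dvd d u \<or> p dvd d v" using pdvd that disj by blast
        then show "p dvd y" using y by (meson dvd_trans)
      qed
      then have "N dvd y" unfolding N_def using prod_primes_dvd finP primeP by blast
      then show False using y by (simp add: nat_dvd_not_less)
    qed
  next
    assume "S u \<inter> S v \<noteq> {}"
    then obtain p where p: "p \<in> S u" "p \<in> S v" by blast
    have pp: "prime p" using p SP that primeP by blast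
    obtain r where r: "\<Prod>(S u) = p * r" using p finS[OF uvV(1)] by (meson dvd_prod_eqI dvd_def id_apply)
    obtain t where t: "\<Prod>(S v) = p * t" using p finS[OF uvV(2)] by (meson dvd_prod_eqI dvd_def id_apply)
    have Nu: "N = p * (d u * r)" using Nsplit[OF uvV(1)] r by simp
    have Nv: "N = p * (d v * t)" using Nsplit[OF uvV(2)] t by simp
    have "d u * r = d v * t" using Nu Nv pp by (metis nat_mult_eq_cancel1 prime_gt_0_nat)
    moreover have "d u * r < N" using Nu N0 prime_gt_1_nat[OF pp] by simp
    moreover have "d u * r \<noteq> 0" using Nu N0 by auto
    ultimately show "\<exists>y. y < N \<and> y \<noteq> 0 \<and> d u dvd y \<and> d v dvd y"
      by (metis dvd_triv_left)
  qed
  have emb: "induced_embedding V E (dep_vertices (zmod N)) (dep_adj (zmod N)) d"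
    unfolding induced_embedding_def
  proof (intro conjI ballI)
    show "inj_on d V" by (rule dinj)
    show "d ` V \<subseteq> dep_vertices (zmod N)"
    proof (rule image_subsetI)
      fix v assume "v \<in> V"
      then show "d v \<in> dep_vertices (zmod N)" using dlt[of v] dpos[of v]
        by (simp add: dep_vertices_def zmod_def)
    qed
  next
    fix u v assume uv: "u \<in> V" "v \<in> V"
    show "E u v \<longleftrightarrow> dep_adj (zmod N) (d u) (d v)"
    proof (cases "u = v")
      case True then show ?thesis using irr uv by (simp add: dep_adj_def)
    next
      case False
      then have ne: "d u \<noteq> d v" using dinj uv by (meson inj_on_def)
      have vert: "d u \<in> dep_vertices (zmod N)" "d v \<in> dep_vertices (zmod N)"
        using dlt[OF uv(1)] dpos[of u] dlt[OF uv(2)] dpos[of v] by (simp_all add: dep_vertices_def zmod_def)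
      have "generate (zmod N) {d u} \<inter> generate (zmod N) {d v} \<noteq> {\<one>\<^bsub>zmod N\<^esub>}
            \<longleftrightarrow> (\<exists>y. y < N \<and> y \<noteq> 0 \<and> d u dvd y \<and> d v dvd y)"
      proof -
        have i: "generate (zmod N) {d u} \<inter> generate (zmod N) {d v} = {y. y < N \<and> d u dvd y \<and> d v dvd y}"
          using gen[OF uv(1)] gen[OF uv(2)] by blast
        have o: "\<one>\<^bsub>zmod N\<^esub> = 0" by (simp add: zmod_def)
        have z: "0 \<in> {y. y < N \<and> d u dvd y \<and> d v dvd y}" using N0 by simp
        have "{y. y < N \<and> d u dvd y \<and> d v dvd y} \<noteq> {0} \<longleftrightarrow> (\<exists>y. y < N \<and> y \<noteq> 0 \<and> d u dvd y \<and> d v dvd y)"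
        proof
          assume "{y. y < N \<and> d u dvd y \<and> d v dvd y} \<noteq> {0}"
          from ne0_helper[OF z this] obtain y where "y \<in> {y. y < N \<and> d u dvd y \<and> d v dvd y}" "y \<noteq> 0" by blast
          then show "\<exists>y. y < N \<and> y \<noteq> 0 \<and> d u dvd y \<and> d v dvd y" by blast
        next
          assume "\<exists>y. y < N \<and> y \<noteq> 0 \<and> d u dvd y \<and> d v dvd y"
          then obtain y where "y < N" "y \<noteq> 0" "d u dvd y" "d v dvd y" by blast
          then have "y \<in> {y. y < N \<and> d u dvd y \<and> d v dvd y}" by simp
          then show "{y. y < N \<and> d u dvd y \<and> d v dvd y} \<noteq> {0}" using \<open>y \<noteq> 0\<close> by (metis singletonD)
        qed
        then show ?thesis unfolding i o .
      qed
      then show ?thesis using key[OF uv] Sint[OF uv False] ne vert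
        by (simp add: dep_adj_def)
    qed
  qed
  show ?thesis
    apply (rule exI[of _ "zmod N"])
    using zmod_group[OF N0] zmod_cyclic[OF N0] emb by (auto simp: zmod_def)
qed

end
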